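(* (Sufficient condition for negative transfer.) Let $\eta_i\ge0$ with $\sum\eta_i<\infty$, let $N_A,N_B>0$ be arbitrary, and suppose $E_B:=\sum_iE_{B,i}>0$. If $\rho<\sqrt{\gamma_A}/(1+\sqrt{\gamma_A})$, then \[ E_{A\to B}(\rho):=\sum_i\Big[2(1-\rho)(1-q_{A,i})+\frac{q_{A,i}^2}{1-\gamma_A}\Big]E_{B,i}\;>\;E_B . \] Indeed each mode satisfies $2(1-\rho)(1-q)+q^2/(1-\gamma_A)>1$ for all real $q$ under this condition.
   Context: For sample size $N$: $\kappa>0$ solves $1=\sum_i\eta_i/(\kappa+N\eta_i)$, $\gamma=\sum_iN\eta_i^2/(\kappa+N\eta_i)^2$, $q_i=\kappa/(\kappa+N\eta_i)$; subscripts $A,B$ denote $N=N_A,N_B$. $E_{B,i}=q_{B,i}^2\eta_i^2/(1-\gamma_B)$. $E_{A\to B}(\rho)$ is the (replica-method) generalization error on task B after sequential training A→B with target similarity $\rho$, and $E_B$ the single-task error on B. *)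

theory Defs
  imports "HOL-Analysis.Analysis"
begin

definition is_kappa :: "(nat \<Rightarrow> real) \<Rightarrow> real \<Rightarrow> real \<Rightarrow> bool" where
  "is_kappa \<eta> N \<kappa> \<longleftrightarrow> \<kappa> > 0 \<and> (\<lambda>i. \<eta> i / (\<kappa> + N * \<eta> i)) sums 1"

definition gam :: "(nat \<Rightarrow> real) \<Rightarrow> real \<Rightarrow> real \<Rightarrow> real" where
  "gam \<eta> N \<kappa> = (\<Sum>i. N * (\<eta> i)\<^sup>2 / (\<kappa> + N * \<eta> i)\<^sup>2)"

definition qq :: "(nat \<Rightarrow> real) \<Rightarrow> real \<Rightarrow> real \<Rightarrow> nat \<Rightarrow> real" where
  "qq \<eta> N \<kappa> i = \<kappa> / (\<kappa> + N * \<eta> i)"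

definition EBi :: "(nat \<Rightarrow> real) \<Rightarrow> real \<Rightarrow> real \<Rightarrow> nat \<Rightarrow> real" where
  "EBi \<eta> NB \<kappa>B i = (qq \<eta> NB \<kappa>B i)\<^sup>2 * (\<eta> i)\<^sup>2 / (1 - gam \<eta> NB \<kappa>B)"

definition EB :: "(nat \<Rightarrow> real) \<Rightarrow> real \<Rightarrow> real \<Rightarrow> real" where
  "EB \<eta> NB \<kappa>B = (\<Sum>i. EBi \<eta> NB \<kappa>B i)"

definition EAB :: "(nat \<Rightarrow> real) \<Rightarrow> real \<Rightarrow> real \<Rightarrow> real \<Rightarrow> real \<Rightarrow> real \<Rightarrow> real" where
  "EAB \<eta> NA \<kappa>A NB \<kappa>B \<rho> =
     (\<Sum>i. (2 * (1 - \<rho>) * (1 - qq \<eta> NA \<kappa>A i)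
            + (qq \<eta> NA \<kappa>A i)\<^sup>2 / (1 - gam \<eta> NA \<kappa>A)) * EBi \<eta> NB \<kappa>B i)"

end

theory Submission
  imports Defs
begin

lemma gam_props:
  fixes \<eta> :: "nat \<Rightarrow> real" and N \<kappa> :: real
  assumes eta: "\<And>i. \<eta> i \<ge> 0" and N: "N > 0" and K: "is_kappa \<eta> N \<kappa>"
  shows "0 \<le> gam \<eta> N \<kappa> \<and> gam \<eta> N \<kappa> < 1"
proof -
  have k: "\<kappa> > 0" and s: "(\<lambda>i. \<eta> i / (\<kappa> + N * \<eta> i)) sums 1" using K by (auto simp: is_kappa_def)
  define u where "u i = \<eta> i / (\<kappa> + N * \<eta> i)" for i
  define t where "t i = N * (\<eta> i)\<^sup>2 / (\<kappa> + N * \<eta> i)\<^sup>2" for i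
  have den: "\<kappa> + N * \<eta> i > 0" for i using k N eta[of i] by (smt (verit) mult_nonneg_nonneg)
  have tu: "t i = u i * (N * \<eta> i / (\<kappa> + N * \<eta> i))" for i
    unfolding t_def u_def by (simp add: power2_eq_square)
  have t0: "0 \<le> t i" for i unfolding t_def using eta[of i] N by simp
  have fr: "N * \<eta> i / (\<kappa> + N * \<eta> i) < 1" for i using den[of i] k by simp
  have u0: "0 \<le> u i" for i unfolding u_def using den[of i] eta[of i] by simp
  have tle: "t i \<le> u i" for i
  proof -
    have "0 \<le> N * \<eta> i / (\<kappa> + N * \<eta> i)" using den[of i] eta[of i] N by simp
    then have "u i * (N * \<eta> i / (\<kappa> + N * \<eta> i)) \<le> u i" using u0[of i] fr[of i]
      by (intro mult_left_le) auto
    then show ?thesis using tu[of i] by simp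
  qed
  have su: "summable u" using s unfolding u_def by (auto simp: sums_iff)
  have su1: "suminf u = 1" using s unfolding u_def by (auto simp: sums_iff)
  have st: "summable t"
    by (intro summable_comparison_test[OF _ su] exI[of _ 0] allI impI) (simp add: t0 tle)
  have "\<exists>i. u i \<noteq> 0"
  proof (rule ccontr)
    assume "\<not> ?thesis" then have "u = (\<lambda>_. 0)" by auto
    then show False using su1 by simp
  qed
  then obtain i where "u i \<noteq> 0" by blast
  then have ui: "u i > 0" using u0[of i] by simp
  have "u i * (N * \<eta> i / (\<kappa> + N * \<eta> i)) < u i * 1"
    using ui fr[of i] by (intro mult_strict_left_mono) auto
  then have "0 < u i - t i" using tu[of i] by simp
  moreover have "summable (\<lambda>i. u i - t i)" using su st by (rule summable_diff)
  moreover have "\<And>n. 0 \<le> u n - t n" using tle by simp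
  ultimately have "0 < suminf (\<lambda>i. u i - t i)"
    using suminf_pos_iff[of "\<lambda>i. u i - t i"] by blast
  then have "suminf t < 1" using suminf_diff[OF su st] su1 by simp
  moreover have "0 \<le> suminf t" using suminf_nonneg[OF st t0] .
  ultimately show ?thesis unfolding gam_def t_def by simp
qed

lemma mode_ineq:
  fixes q s g r :: real
  assumes r0: "0 \<le> r" and r1: "r < 1" and gd: "g = 1 - r^2" and q0: "0 \<le> q" and q1: "q < 1"
    and sr: "s > 1 / (1 + r)"
  shows "2 * s * (1 - q) + q^2 / g > 1"
proof -
  have g: "g > 0" using r0 r1 gd by (simp add: power_less_one_iff)
  have s1: "s * (1 + r) > 1" using sr r0 by (simp add: field_simps)
  have A: "(s * (1 + r)) * (2 * (1 - q)) > 1 * (2 * (1 - q))"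
    using s1 q1 by (intro mult_strict_right_mono) auto
  have B: "(1 - r) * ((s * (1 + r)) * (2 * (1 - q))) > (1 - r) * (2 * (1 - q))"
    using A r1 by (intro mult_strict_left_mono) auto
  have C: "g * (2 * s * (1 - q)) = (1 - r) * ((s * (1 + r)) * (2 * (1 - q)))"
    unfolding gd by (simp add: power2_eq_square algebra_simps)
  have D: "(1 - r) * (2 * (1 - q)) + q^2 - g = (q - (1 - r))^2"
    unfolding gd by (simp add: power2_eq_square algebra_simps)
  have E: "g * (2 * s * (1 - q)) + q^2 > g"
    using B C D by (smt (verit) zero_le_power2)
  have "g * (2 * s * (1 - q) + q^2 / g) = g * (2 * s * (1 - q)) + q^2"
    using g by (simp add: distrib_left)
  then have "g * (2 * s * (1 - q) + q^2 / g) > g * 1" using E by simp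
  then show ?thesis using g by (simp add: mult_less_cancel_left_pos)
qed

theorem mainTheorem5:
  fixes \<eta> :: "nat \<Rightarrow> real" and NA NB \<kappa>A \<kappa>B \<rho> :: real
  assumes "\<And>i. \<eta> i \<ge> 0"
    and "summable \<eta>"
    and "NA > 0" and "NB > 0"
    and "is_kappa \<eta> NA \<kappa>A" and "is_kappa \<eta> NB \<kappa>B"
    and "EB \<eta> NB \<kappa>B > 0"
    and "\<rho> < sqrt (gam \<eta> NA \<kappa>A) / (1 + sqrt (gam \<eta> NA \<kappa>A))"
  shows "EAB \<eta> NA \<kappa>A NB \<kappa>B \<rho> > EB \<eta> NB \<kappa>B"
proof -
  define \<gamma> where "\<gamma> = gam \<eta> NA \<kappa>A"
  define r where "r = sqrt \<gamma>"
  define E where "E i = EBi \<eta> NB \<kappa>B i" for i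
  define q where "q i = qq \<eta> NA \<kappa>A i" for i
  define f where "f i = 2 * (1 - \<rho>) * (1 - q i) + (q i)\<^sup>2 / (1 - \<gamma>)" for i
  have gA: "0 \<le> \<gamma>" "\<gamma> < 1" using gam_props[OF assms(1,3,5)] \<gamma>_def by auto
  have gB: "gam \<eta> NB \<kappa>B < 1" using gam_props[OF assms(1,4,6)] by auto
  have r: "0 \<le> r" "r < 1" "\<gamma> = r^2" using gA r_def by (auto simp: real_sqrt_lt_1_iff)
  have kA: "\<kappa>A > 0" using assms(5) by (simp add: is_kappa_def)
  have E0: "0 \<le> E i" for i unfolding E_def EBi_def using gB by simp
  have sE: "summable E"
  proof (rule summable_comparison_test[OF _ summable_mult[OF assms(2), of "\<kappa>B / NB / (1 - gam \<eta> NB \<kappa>B)"]], intro allI exI impI)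
    fix i :: nat
    have kB: "\<kappa>B > 0" using assms(6) by (simp add: is_kappa_def)
    have d: "\<kappa>B + NB * \<eta> i > 0" using kB assms(4) assms(1)[of i] by (smt (verit) mult_nonneg_nonneg)
    have "qq \<eta> NB \<kappa>B i \<le> 1" unfolding qq_def using d assms(4) assms(1)[of i]
      by (simp add: divide_le_eq_1)
    moreover have "0 \<le> qq \<eta> NB \<kappa>B i" unfolding qq_def using d kB by simp
    moreover have "qq \<eta> NB \<kappa>B i * \<eta> i \<le> \<kappa>B / NB" unfolding qq_def using d kB assms(4) assms(1)[of i]
      by (simp add: field_simps)
    ultimately have "(qq \<eta> NB \<kappa>B i)\<^sup>2 * (\<eta> i)\<^sup>2 \<le> \<kappa>B / NB * \<eta> i"
    proof -
      assume a: "qq \<eta> NB \<kappa>B i \<le> 1" "0 \<le> qq \<eta> NB \<kappa>B i" "qq \<eta> NB \<kappa>B i * \<eta> i \<le> \<kappa>B / NB"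
      define x where "x = qq \<eta> NB \<kappa>B i * \<eta> i"
      have x0: "0 \<le> x" unfolding x_def using a assms(1)[of i] by simp
      have "x * x \<le> \<kappa>B / NB * x" using a(3) x0 unfolding x_def[symmetric] by (rule mult_right_mono)
      also have "x \<le> \<eta> i" unfolding x_def using a(1) assms(1)[of i] by (simp add: mult_left_le_one_le a(2))
      then have "\<kappa>B / NB * x \<le> \<kappa>B / NB * \<eta> i" using kB assms(4) by (intro mult_left_mono) auto
      finally show ?thesis unfolding x_def by (simp add: power2_eq_square algebra_simps)
    qed
    then have "E i \<le> \<kappa>B / NB / (1 - gam \<eta> NB \<kappa>B) * \<eta> i"
    proof -
      assume h: "(qq \<eta> NB \<kappa>B i)\<^sup>2 * (\<eta> i)\<^sup>2 \<le> \<kappa>B / NB * \<eta> i"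
      have "(qq \<eta> NB \<kappa>B i)\<^sup>2 * (\<eta> i)\<^sup>2 / (1 - gam \<eta> NB \<kappa>B) \<le> \<kappa>B / NB * \<eta> i / (1 - gam \<eta> NB \<kappa>B)"
        using h gB by (intro divide_right_mono) auto
      then show ?thesis unfolding E_def EBi_def by simp
    qed
    then show "norm (E i) \<le> \<kappa>B / NB / (1 - gam \<eta> NB \<kappa>B) * \<eta> i" using E0[of i] by simp
  qed
  have dA: "\<kappa>A + NA * \<eta> i > 0" for i
  proof -
    have "0 \<le> NA * \<eta> i" using assms(3) assms(1)[of i] by simp
    then show ?thesis using kA by linarith
  qed
  have q01: "0 < q i" "q i \<le> 1" for i
  proof -
    show "0 < q i" unfolding q_def qq_def using kA dA[of i] by simp
    have "0 \<le> NA * \<eta> i" using assms(3) assms(1)[of i] by simp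
    then show "q i \<le> 1" unfolding q_def qq_def using dA[of i] by (simp add: divide_le_eq_1)
  qed
  have fb: "norm (f i * E i) \<le> (2 * \<bar>1 - \<rho>\<bar> + 1 / (1 - \<gamma>)) * E i" for i
  proof -
    have "\<bar>f i\<bar> \<le> 2 * \<bar>1 - \<rho>\<bar> + 1 / (1 - \<gamma>)"
    proof -
      have a: "\<bar>2 * (1 - \<rho>) * (1 - q i)\<bar> \<le> 2 * \<bar>1 - \<rho>\<bar>"
      proof -
        have "\<bar>2 * (1 - \<rho>) * (1 - q i)\<bar> = (2 * \<bar>1 - \<rho>\<bar>) * (1 - q i)"
          using q01[of i] by (simp only: abs_mult)
        also have "\<dots> \<le> 2 * \<bar>1 - \<rho>\<bar>" using q01[of i] by (intro mult_left_le) auto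
        finally show ?thesis .
      qed
      have b: "(q i)\<^sup>2 / (1 - \<gamma>) \<le> 1 / (1 - \<gamma>)" using q01[of i] gA
        by (intro divide_right_mono) (auto simp: power_le_one)
      have c: "0 \<le> (q i)\<^sup>2 / (1 - \<gamma>)" using gA by simp
      show ?thesis unfolding f_def using a b c by linarith
    qed
    then show ?thesis using E0[of i] by (simp add: abs_mult mult_right_mono)
  qed
  have sf: "summable (\<lambda>i. f i * E i)"
    by (rule summable_comparison_test[OF _ summable_mult[OF sE]]) (use fb in auto)
  have key: "\<eta> i > 0 \<Longrightarrow> f i > 1" for i
  proof -
    assume p: "\<eta> i > 0"
    have "0 < NA * \<eta> i" using assms(3) p by simp
    then have "q i < 1" unfolding q_def qq_def using dA[of i] by (simp add: divide_less_eq_1)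
    moreover have "1 - \<rho> > 1 / (1 + r)"
      using assms(8) r unfolding \<gamma>_def[symmetric] r_def[symmetric]
      by (simp add: field_simps)
    ultimately show ?thesis unfolding f_def
      using mode_ineq[of r "1 - \<gamma>" "q i" "1 - \<rho>"] r q01[of i] by (simp add: mult.assoc)
  qed
  have eta0: "\<eta> i = 0 \<Longrightarrow> E i = 0" for i unfolding E_def EBi_def by simp
  have nn: "0 \<le> f i * E i - E i" for i
  proof (cases "\<eta> i = 0")
    case True then show ?thesis using eta0 by simp
  next
    case False then have "f i > 1" using key assms(1)[of i] by (simp add: less_le)
    then have "1 * E i \<le> f i * E i" using E0[of i] by (intro mult_right_mono) auto
    then show ?thesis by simp
  qed
  obtain i where Ei: "E i > 0"
    using suminf_pos_iff[OF sE E0] assms(7) unfolding EB_def E_def by auto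
  then have "\<eta> i \<noteq> 0" using eta0 by force
  then have "f i > 1" using key assms(1)[of i] by (simp add: less_le)
  then have "0 < f i * E i - E i" using Ei by simp
  then have "0 < (\<Sum>i. f i * E i - E i)"
    using suminf_pos_iff[of "\<lambda>i. f i * E i - E i"] nn summable_diff[OF sf sE] by auto
  then have "suminf E < (\<Sum>i. f i * E i)" using suminf_diff[OF sf sE] by simp
  then show ?thesis unfolding EAB_def EB_def E_def f_def q_def \<gamma>_def by simp
qed

end
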